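(* Let $k$ be divisible by $3$ and let $0<\varepsilon<3/k$. Let $G$ be the complete bipartite graph with one side the terminals $Q=\{q_1,\dots,q_k\}$ and the other side non-terminals $U=\{u_{S_1},\dots,u_{S_l}\}$, where $l=\binom{k}{2k/3}$ and $S_1,\dots,S_l$ are all the subsets of $Q$ of size $2k/3$. Edge costs: $c(u_{S_i},q)=1$ if $q\in S_i$ and $c(u_{S_i},q)=2+\varepsilon$ if $q\in\bar S_i=Q\setminus S_i$. Then for every $i\in[l]$, the cut $(W,V(G)\setminus W)$ with $W=\{u_{S_i}\}\cup\bar S_i$ and $V(G)\setminus W=\{u_{S_j}:j\neq i\}\cup S_i$ is the unique minimum-cost $S_i$-separating cut of $(G,c)$.
   Context: A cut $(W,V(G)\setminus W)$ is $S$-separating if $W\cap Q\in\{S,Q\setminus S\}$; its cost is the sum of costs of edges with exactly one endpoint in $W$. Unique means every other $S_i$-separating cut has strictly larger cost. *)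

theory Defs
  imports Complex_Main
begin

definition cut_cost :: "'a set set \<Rightarrow> ('a set \<Rightarrow> real) \<Rightarrow> 'a set \<Rightarrow> real" where
  "cut_cost E c W = (\<Sum>e\<in>{e\<in>E. card (e \<inter> W) = 1}. c e)"

definition separating_cut :: "'a set \<Rightarrow> 'a set \<Rightarrow> 'a set \<Rightarrow> 'a set \<Rightarrow> bool" where
  "separating_cut V Q S W \<longleftrightarrow> W \<subseteq> V \<and> (W \<inter> Q = S \<or> W \<inter> Q = Q - S)"

(* The cut (W, V - W) is the unique minimum-cost S-separating cut:
   it is S-separating and every other S-separating cut (i.e. not the same unordered
   bipartition {W, V - W}) has strictly larger cost. *)
definition unique_min_sep_cut ::
  "'a set \<Rightarrow> 'a set set \<Rightarrow> ('a set \<Rightarrow> real) \<Rightarrow> 'a set \<Rightarrow> 'a set \<Rightarrow> 'a set \<Rightarrow> bool" where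
  "unique_min_sep_cut V E c Q S W \<longleftrightarrow>
     separating_cut V Q S W \<and>
     (\<forall>W'. separating_cut V Q S W' \<and> W' \<noteq> W \<and> W' \<noteq> V - W \<longrightarrow>
            cut_cost E c W < cut_cost E c W')"

(* The concrete construction. Terminals q_0..q_{k-1}; non-terminals u_S for S a
   subset of the terminal indices {0..<k} of size 2k/3. *)
datatype vtx = Term nat | NT "nat set"

definition subsets_Q :: "nat \<Rightarrow> nat set set" where
  "subsets_Q k = {S. S \<subseteq> {0..<k} \<and> card S = 2 * k div 3}"

definition terms :: "nat \<Rightarrow> vtx set" where
  "terms k = Term ` {0..<k}"

definition verts :: "nat \<Rightarrow> vtx set" where
  "verts k = terms k \<union> NT ` subsets_Q k"

definition edges :: "nat \<Rightarrow> vtx set set" where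
  "edges k = {{NT S, Term q} | S q. S \<in> subsets_Q k \<and> q \<in> {0..<k}}"

definition cost :: "real \<Rightarrow> vtx set \<Rightarrow> real" where
  "cost \<epsilon> e = (if \<exists>S q. e = {NT S, Term q} \<and> q \<in> S then 1 else 2 + \<epsilon>)"

end

theory Submission
  imports Defs
begin

definition cc :: "real \<Rightarrow> nat set \<Rightarrow> nat \<Rightarrow> real" where
  "cc \<epsilon> T q = (if q \<in> T then 1 else 2 + \<epsilon>)"

lemma finite_subsets: "finite (subsets_Q k)"
  unfolding subsets_Q_def by (rule finite_subset[of _ "Pow {0..<k}"]) auto

lemma cost_edge: "cost \<epsilon> {NT T, Term q} = cc \<epsilon> T q"
  unfolding cost_def cc_def by (auto simp: doubleton_eq_iff)

lemma card_edge: "(card ({NT T, Term q} \<inter> W) = 1) = ((NT T \<in> W) \<noteq> (Term q \<in> W))"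
  by (cases "NT T \<in> W"; cases "Term q \<in> W") (auto simp: Int_insert_left)

lemma cut_cost_eq:
  "cut_cost (edges k) (cost \<epsilon>) W =
    (\<Sum>T\<in>subsets_Q k. \<Sum>q\<in>{q\<in>{0..<k}. (NT T \<in> W) \<noteq> (Term q \<in> W)}. cc \<epsilon> T q)"
proof -
  define h where "h = (\<lambda>(T::nat set, q::nat). {NT T, Term q})"
  define P where "P = Sigma (subsets_Q k) (\<lambda>T. {q\<in>{0..<k}. (NT T \<in> W) \<noteq> (Term q \<in> W)})"
  have img: "{e\<in>edges k. card (e \<inter> W) = 1} = h ` P"
    unfolding h_def P_def edges_def using card_edge by fastforce
  have inj: "inj_on h P"
    unfolding h_def inj_on_def by (auto simp: doubleton_eq_iff)
  have "cut_cost (edges k) (cost \<epsilon>) W = sum (cost \<epsilon>) (h ` P)"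
    unfolding cut_cost_def img ..
  also have "\<dots> = sum (cost \<epsilon> \<circ> h) P" by (rule sum.reindex[OF inj])
  also have "\<dots> = (\<Sum>(T,q)\<in>P. cc \<epsilon> T q)"
    by (rule sum.cong) (auto simp: h_def cost_edge)
  also have "\<dots> = (\<Sum>T\<in>subsets_Q k. \<Sum>q\<in>{q\<in>{0..<k}. (NT T \<in> W) \<noteq> (Term q \<in> W)}. cc \<epsilon> T q)"
    unfolding P_def by (rule sum.Sigma[symmetric]) (auto simp: finite_subsets)
  finally show ?thesis .
qed

lemma sumc: "finite X \<Longrightarrow> (\<Sum>q\<in>X. cc \<epsilon> T q) = real (card (X \<inter> T)) + (2+\<epsilon>) * real (card (X - T))"
proof -
  assume f: "finite X"
  have "(\<Sum>q\<in>X. cc \<epsilon> T q) = (\<Sum>q\<in>X\<inter>T. cc \<epsilon> T q) + (\<Sum>q\<in>X-T. cc \<epsilon> T q)"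
    by (rule sum.Int_Diff[OF f])
  also have "(\<Sum>q\<in>X\<inter>T. cc \<epsilon> T q) = (\<Sum>q\<in>X\<inter>T. 1)" by (rule sum.cong) (auto simp: cc_def)
  also have "(\<Sum>q\<in>X-T. cc \<epsilon> T q) = (\<Sum>q\<in>X-T. 2+\<epsilon>)" by (rule sum.cong) (auto simp: cc_def)
  finally show ?thesis by (simp add: mult.commute)
qed

lemma cut_cost_side:
  assumes "\<forall>q<k. (Term q \<in> W) = (q \<notin> S)" and "S \<subseteq> {0..<k}"
  shows "cut_cost (edges k) (cost \<epsilon>) W =
    (\<Sum>T\<in>subsets_Q k. if NT T \<in> W then (\<Sum>q\<in>S. cc \<epsilon> T q) else (\<Sum>q\<in>{0..<k}-S. cc \<epsilon> T q))"
  unfolding cut_cost_eq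
proof (rule sum.cong[OF refl])
  fix T
  have "NT T \<in> W \<Longrightarrow> {q\<in>{0..<k}. (NT T \<in> W) \<noteq> (Term q \<in> W)} = S"
    using assms by auto
  moreover have "NT T \<notin> W \<Longrightarrow> {q\<in>{0..<k}. (NT T \<in> W) \<noteq> (Term q \<in> W)} = {0..<k} - S"
    using assms by auto
  ultimately show "(\<Sum>q\<in>{q\<in>{0..<k}. (NT T \<in> W) \<noteq> (Term q \<in> W)}. cc \<epsilon> T q) =
     (if NT T \<in> W then (\<Sum>q\<in>S. cc \<epsilon> T q) else (\<Sum>q\<in>{0..<k}-S. cc \<epsilon> T q))"
    by auto
qed

lemma cut_cost_compl:
  assumes "W' \<subseteq> verts k"
  shows "cut_cost (edges k) (cost \<epsilon>) (verts k - W') = cut_cost (edges k) (cost \<epsilon>) W'"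
  unfolding cut_cost_eq
proof (rule sum.cong[OF refl])
  fix T assume T: "T \<in> subsets_Q k"
  have "{q\<in>{0..<k}. (NT T \<in> verts k - W') \<noteq> (Term q \<in> verts k - W')}
      = {q\<in>{0..<k}. (NT T \<in> W') \<noteq> (Term q \<in> W')}"
    using T by (auto simp: verts_def terms_def)
  then show "(\<Sum>q\<in>{q\<in>{0..<k}. (NT T \<in> verts k - W') \<noteq> (Term q \<in> verts k - W')}. cc \<epsilon> T q)
      = (\<Sum>q\<in>{q\<in>{0..<k}. (NT T \<in> W') \<noteq> (Term q \<in> W')}. cc \<epsilon> T q)" by simp
qed

lemma ineq_other:
  assumes T: "T \<in> subsets_Q k" and S: "S \<in> subsets_Q k" and ne: "T \<noteq> S"
    and k: "k = 3*m" and e: "0 < \<epsilon>" and me: "real m * \<epsilon> < 1"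
  shows "(\<Sum>q\<in>{0..<k}-S. cc \<epsilon> T q) < (\<Sum>q\<in>S. cc \<epsilon> T q)"
proof -
  have Tk: "T \<subseteq> {0..<k}" and cT: "card T = 2*m" and Sk: "S \<subseteq> {0..<k}" and cS: "card S = 2*m"
    using T S k unfolding subsets_Q_def by auto
  have fS: "finite S" and fT: "finite T" using Sk Tk finite_subset by blast+
  define a where "a = card (S \<inter> T)"
  define b where "b = card (S - T)"
  define c where "c = card (({0..<k}-S) \<inter> T)"
  define d where "d = card (({0..<k}-S) - T)"
  have ab: "a + b = 2*m" unfolding a_def b_def cS[symmetric]
    using card_Int_Diff[OF fS, of T] by simp
  have "({0..<k}-S) \<inter> T = T - S" using Tk by auto
  moreover have "card T = card (T \<inter> S) + card (T - S)" using card_Int_Diff[OF fT, of S] .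
  ultimately have ac: "a + c = 2*m" unfolding a_def c_def using cT by (simp add: Int_commute)
  have "card ({0..<k}-S) = m" using Sk cS k by (simp add: card_Diff_subset finite_subset)
  moreover have "card ({0..<k}-S) = c + d" unfolding c_def d_def by (rule card_Int_Diff) simp
  ultimately have cd: "c + d = m" by simp
  have "a \<noteq> 2*m"
  proof
    assume "a = 2*m"
    then have "card (S \<inter> T) = card S" using cS a_def by simp
    then have "S \<inter> T = S" using card_subset_eq[OF fS, of "S \<inter> T"] by blast
    then have "S \<subseteq> T" by blast
    then have "S = T" using card_subset_eq[OF fT, of S] cS cT by simp
    then show False using ne by simp
  qed
  then have a2: "a + 1 \<le> 2*m" using ab by linarith
  have r1: "real a + real b = 2 * real m" using arg_cong[OF ab, of real] by simp
  have r2: "real a + real c = 2 * real m" using arg_cong[OF ac, of real] by simp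
  have r3: "real c + real d = real m" using arg_cong[OF cd, of real] by simp
  have r4: "real a + 1 \<le> 2 * real m" using a2 by (metis of_nat_Suc of_nat_le_iff of_nat_mult of_nat_numeral Suc_eq_plus1 add.commute)
  have "real d \<le> real b + real m" using r1 r2 r3 r4 by linarith
  then have "\<epsilon> * real d \<le> \<epsilon> * (real b + real m)" using e by (simp add: mult_left_mono)
  then have key: "\<epsilon> * real d \<le> \<epsilon> * real b + real m * \<epsilon>" by (simp add: algebra_simps)
  have "(\<Sum>q\<in>{0..<k}-S. cc \<epsilon> T q) = real c + (2+\<epsilon>) * real d" unfolding c_def d_def by (rule sumc) simp
  moreover have "(\<Sum>q\<in>S. cc \<epsilon> T q) = real a + (2+\<epsilon>) * real b" unfolding a_def b_def by (rule sumc[OF fS])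
  moreover have "real c + (2+\<epsilon>) * real d = real c + 2*real d + \<epsilon>*real d" by (simp add: algebra_simps)
  moreover have "real a + (2+\<epsilon>) * real b = real a + 2*real b + \<epsilon>*real b" by (simp add: algebra_simps)
  ultimately show ?thesis using key me r1 r2 r3 r4 by linarith
qed

lemma ineq_self:
  assumes S: "S \<in> subsets_Q k" and k: "k = 3*m" and e: "0 < \<epsilon>" and m: "m \<ge> 1"
  shows "(\<Sum>q\<in>S. cc \<epsilon> S q) < (\<Sum>q\<in>{0..<k}-S. cc \<epsilon> S q)"
proof -
  have Sk: "S \<subseteq> {0..<k}" and cS: "card S = 2*m" using S k unfolding subsets_Q_def by auto
  have fS: "finite S" using Sk finite_subset by blast
  have "card ({0..<k}-S) = m" using Sk cS k by (simp add: card_Diff_subset finite_subset)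
  then have "(\<Sum>q\<in>{0..<k}-S. cc \<epsilon> S q) = (2+\<epsilon>) * real m" using sumc[of "{0..<k}-S" \<epsilon> S] by (simp add: Diff_Int_distrib2)
  moreover have "(\<Sum>q\<in>S. cc \<epsilon> S q) = 2 * real m" using sumc[OF fS, of \<epsilon> S] cS by simp
  moreover have "0 < \<epsilon> * real m" using e m by simp
  ultimately show ?thesis by (simp add: algebra_simps)
qed

lemma better:
  assumes S: "S \<in> subsets_Q k" and k: "k = 3*m" and e: "0 < \<epsilon>" and m: "m \<ge> 1" and me: "real m * \<epsilon> < 1"
    and W: "W \<subseteq> verts k" and WT: "\<forall>q<k. (Term q \<in> W) = (q \<notin> S)"
    and ne: "W \<noteq> {NT S} \<union> Term ` ({0..<k} - S)"
  shows "cut_cost (edges k) (cost \<epsilon>) ({NT S} \<union> Term ` ({0..<k} - S)) < cut_cost (edges k) (cost \<epsilon>) W"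
proof -
  define W0 where "W0 = {NT S} \<union> Term ` ({0..<k} - S)"
  have Sk: "S \<subseteq> {0..<k}" using S unfolding subsets_Q_def by auto
  have W0T: "\<forall>q<k. (Term q \<in> W0) = (q \<notin> S)" unfolding W0_def by auto
  have W0N: "\<And>T. (NT T \<in> W0) = (T = S)" unfolding W0_def by auto
  define A where "A T = (\<Sum>q\<in>S. cc \<epsilon> T q)" for T
  define B where "B T = (\<Sum>q\<in>{0..<k}-S. cc \<epsilon> T q)" for T
  have c0: "cut_cost (edges k) (cost \<epsilon>) W0 = (\<Sum>T\<in>subsets_Q k. if NT T \<in> W0 then A T else B T)"
    unfolding A_def B_def by (rule cut_cost_side[OF W0T Sk])
  have c1: "cut_cost (edges k) (cost \<epsilon>) W = (\<Sum>T\<in>subsets_Q k. if NT T \<in> W then A T else B T)"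
    unfolding A_def B_def by (rule cut_cost_side[OF WT Sk])
  have ex: "\<exists>T\<in>subsets_Q k. (NT T \<in> W) \<noteq> (NT T \<in> W0)"
  proof (rule ccontr)
    assume "\<not> ?thesis"
    then have h: "\<And>T. T \<in> subsets_Q k \<Longrightarrow> (NT T \<in> W) = (NT T \<in> W0)" by blast
    have "W = W0"
    proof (rule set_eqI)
      fix x show "(x \<in> W) = (x \<in> W0)"
      proof (cases x)
        case (Term q)
        show ?thesis
        proof (cases "q < k")
          case True then show ?thesis using WT W0T Term by simp
        next
          case False
          then have "x \<notin> verts k" using Term S unfolding verts_def terms_def by auto
          moreover have "x \<notin> W0" using False Term unfolding W0_def by auto
          ultimately show ?thesis using W by blast
        qed
      next
        case (NT T)
        show ?thesis
        proof (cases "T \<in> subsets_Q k")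
          case True then show ?thesis using h NT by simp
        next
          case False
          then have "x \<notin> verts k" using NT unfolding verts_def terms_def by auto
          moreover have "x \<notin> W0" using False NT S W0N by metis
          ultimately show ?thesis using W by blast
        qed
      qed
    qed
    then show False using ne W0_def by simp
  qed
  have AB1: "A S < B S" unfolding A_def B_def by (rule ineq_self[OF S k e m])
  have AB2: "\<And>T. T \<in> subsets_Q k \<Longrightarrow> T \<noteq> S \<Longrightarrow> B T < A T"
    unfolding A_def B_def by (rule ineq_other[OF _ S _ k e me])
  have "(\<Sum>T\<in>subsets_Q k. if NT T \<in> W0 then A T else B T) < (\<Sum>T\<in>subsets_Q k. if NT T \<in> W then A T else B T)"
  proof (rule sum_strict_mono_ex1[OF finite_subsets])
    show "\<forall>T\<in>subsets_Q k. (if NT T \<in> W0 then A T else B T) \<le> (if NT T \<in> W then A T else B T)"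
    proof
      fix T assume T: "T \<in> subsets_Q k"
      show "(if NT T \<in> W0 then A T else B T) \<le> (if NT T \<in> W then A T else B T)"
        using AB1 AB2[OF T] unfolding W0N by (cases "T = S") auto
    qed
    show "\<exists>T\<in>subsets_Q k. (if NT T \<in> W0 then A T else B T) < (if NT T \<in> W then A T else B T)"
    proof -
      obtain T where T: "T \<in> subsets_Q k" and d: "(NT T \<in> W) \<noteq> (NT T \<in> W0)" using ex by blast
      show ?thesis
      proof (rule bexI[OF _ T], cases "T = S")
        case True then show "(if NT T \<in> W0 then A T else B T) < (if NT T \<in> W then A T else B T)"
          using AB1 d W0N by simp
      next
        case False then show "(if NT T \<in> W0 then A T else B T) < (if NT T \<in> W then A T else B T)"
          using AB2[OF T False] d W0N by simp
      qed
    qed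
  qed
  then show ?thesis using c0 c1 W0_def by simp
qed

theorem lemma3p5:
  fixes k :: nat and \<epsilon> :: real
  assumes "3 dvd k" and "0 < \<epsilon>" and "\<epsilon> < 3 / real k"
  shows "\<forall>S\<in>subsets_Q k.
           unique_min_sep_cut (verts k) (edges k) (cost \<epsilon>) (terms k) (Term ` S)
             ({NT S} \<union> Term ` ({0..<k} - S))"
proof
  fix S assume S: "S \<in> subsets_Q k"
  obtain m where k: "k = 3*m" using assms(1) by blast
  have "k \<noteq> 0" using assms(2,3) by (cases "k = 0") auto
  then have m: "m \<ge> 1" using k by simp
  have "\<epsilon> * real k < 3" using assms(3) \<open>k \<noteq> 0\<close> by (simp add: pos_less_divide_eq mult.commute)
  then have me: "real m * \<epsilon> < 1" using k by (simp add: algebra_simps)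
  define W0 where "W0 = {NT S} \<union> Term ` ({0..<k} - S)"
  have Sk: "S \<subseteq> {0..<k}" using S unfolding subsets_Q_def by auto
  have sep0: "separating_cut (verts k) (terms k) (Term ` S) W0"
  proof -
    have "W0 \<subseteq> verts k" using S unfolding W0_def verts_def terms_def by auto
    moreover have "W0 \<inter> terms k = terms k - Term ` S" unfolding W0_def terms_def by auto
    ultimately show ?thesis unfolding separating_cut_def by blast
  qed
  show "unique_min_sep_cut (verts k) (edges k) (cost \<epsilon>) (terms k) (Term ` S) W0"
    unfolding unique_min_sep_cut_def
  proof (intro conjI allI impI sep0)
    fix W' assume h: "separating_cut (verts k) (terms k) (Term ` S) W' \<and> W' \<noteq> W0 \<and> W' \<noteq> verts k - W0"
    then have W': "W' \<subseteq> verts k" unfolding separating_cut_def by blast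
    from h consider "W' \<inter> terms k = Term ` S" | "W' \<inter> terms k = terms k - Term ` S"
      unfolding separating_cut_def by blast
    then show "cut_cost (edges k) (cost \<epsilon>) W0 < cut_cost (edges k) (cost \<epsilon>) W'"
    proof cases
      case 1
      define W'' where "W'' = verts k - W'"
      have WT: "\<forall>q<k. (Term q \<in> W'') = (q \<notin> S)"
      proof (intro allI impI)
        fix q assume q: "q < k"
        then have "Term q \<in> terms k" "Term q \<in> verts k" unfolding terms_def verts_def by auto
        then show "(Term q \<in> W'') = (q \<notin> S)" using 1 unfolding W''_def by auto
      qed
      have "W' = verts k - W''" unfolding W''_def using W' by blast
      then have ne: "W'' \<noteq> W0" using h by blast
      have sub: "W'' \<subseteq> verts k" unfolding W''_def by blast
      have "cut_cost (edges k) (cost \<epsilon>) W0 < cut_cost (edges k) (cost \<epsilon>) W''"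
        using better[OF S k assms(2) m me sub WT] ne unfolding W0_def by blast
      then show ?thesis using cut_cost_compl[OF W', of \<epsilon>] W''_def by simp
    next
      case 2
      have WT: "\<forall>q<k. (Term q \<in> W') = (q \<notin> S)"
      proof (intro allI impI)
        fix q assume q: "q < k"
        then have "Term q \<in> terms k" unfolding terms_def by auto
        then show "(Term q \<in> W') = (q \<notin> S)" using 2 by auto
      qed
      show ?thesis using better[OF S k assms(2) m me W' WT] h unfolding W0_def by blast
    qed
  qed
qed

end
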